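(* In the setting described in the context, at the $k$-th iteration of Algorithm Solve(QVP), for each $v\in V^k$ let $w_v=v+t_v\hat d$ where $t_v$ is the optimal value of $(P^2(v))$. Then $$d_H(\mathcal{P}^k,\mathcal{Y}^{\diamond})\le\max_{v\in V^k}\|w_v-v\|.$$
   Context: Setting: $\mathcal{S}\subset\mathbb{R}^n$ nonempty convex compact; $f=(f_1,\dots,f_p):\mathbb{R}^n\to\mathbb{R}^p$ ($p\ge2$), each $f_i$ strictly quasiconvex on $\mathcal{S}$ (continuous and $h(x^1)<h(x^2)\Rightarrow h(\lambda x^1+(1-\lambda)x^2)<h(x^2)$ for $0<\lambda<1$). Vector inequalities are componentwise, $[a,b]=\{z:a\le z\le b\}$, $e^i$ is the $i$-th unit vector, $e=(1,\dots,1)$. $\mathcal{Y}=f(\mathcal{S})$, $\mathcal{Y}^+=\mathcal{Y}+\mathbb{R}^p_+$. $m_i=\min_{x\in\mathcal{S}}f_i(x)$ (assume $m\notin\mathcal{Y}$); $M\in\mathbb{R}^p$ satisfies $M_i\ge\max_{x\in\mathcal{S}}f_i(x)$ (constructed as the max of $f_i$ over the vertices of a simplex containing $\mathcal{S}$). $\mathcal{Y}^{\diamond}=\mathcal{Y}^+\cap(M-\mathbb{R}^p_+)$. Fix $\hat d>0$; $(P^2(v))$ is $\min_{x\in\mathcal{S}}\max_j (f_j(x)-v_j)/\hat d_j$. For finite $V\subset[m,M]$, the copolyblock with vertex set $V$ is $\bigcup_{v\in V}[v,M]$; a vertex is proper if no other vertex $v'\ne v$ satisfies $v'\le v$. Algorithm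 Solve(QVP) with tolerance $\epsilon\ge0$: set $V^0=\{m\}$, $V_\varepsilon=\emptyset$, $\mathcal{Y}_{WN}=\emptyset$, $k=0$. While $V^k\setminus V_\varepsilon\ne\emptyset$: choose $v^k\in V^k\setminus V_\varepsilon$, solve $(P^2(v^k))$ obtaining optimal $(x^k,t_k)$, set $w^k=v^k+t_k\hat d$, add $f(x^k)$ to $\mathcal{Y}_{WN}$; if $\|w^k-v^k\|\le\epsilon$, add $v^k$ to $V_\varepsilon$ and repeat the loop (without changing $k$); otherwise set $V^{k+1}=(V^k\setminus\{v^k\})\cup\{v^k+(w^k_i-v^k_i)e^i: i=1,\dots,p\}$, remove its improper elements, and increase $k$ by one. $\mathcal{P}^k=\bigcup_{v\in V^k}[v,M]$ ($\mathcal{P}^0=[m,M]$). $d_H(Q_1,Q_2)=\max\{\sup_{a\in Q_1}d(a,Q_2),\sup_{b\in Q_2}d(b,Q_1)\}$ is the Hausdorff distance, $d(a,Q)=\inf_{y\in Q}\|a-y\|$. *)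

theory Defs
  imports "HOL-Analysis.Analysis"
begin

(* Vectors in R^p are elements of real^'p; the order on real^'p is the
   library's componentwise order (less_eq_vec_def), so {a..b} = [a,b]. *)

definition strictly_quasiconvex_on :: "(real^'n) set \<Rightarrow> (real^'n \<Rightarrow> real) \<Rightarrow> bool" where
  "strictly_quasiconvex_on S h \<longleftrightarrow> continuous_on S h \<and>
     (\<forall>x1\<in>S. \<forall>x2\<in>S. \<forall>t::real. h x1 < h x2 \<and> 0 < t \<and> t < 1
        \<longrightarrow> h (t *\<^sub>R x1 + (1 - t) *\<^sub>R x2) < h x2)"

definition ideal_point :: "(real^'n \<Rightarrow> real^'p) \<Rightarrow> (real^'n) set \<Rightarrow> real^'p" where
  "ideal_point f S = (\<chi> i. Inf ((\<lambda>x. f x $ i) ` S))"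

definition P2obj :: "(real^'n \<Rightarrow> real^'p) \<Rightarrow> real^'p \<Rightarrow> real^'p \<Rightarrow> real^'n \<Rightarrow> real" where
  "P2obj f dh v x = Max ((\<lambda>j. (f x $ j - v $ j) / dh $ j) ` UNIV)"

definition P2val :: "(real^'n \<Rightarrow> real^'p) \<Rightarrow> (real^'n) set \<Rightarrow> real^'p \<Rightarrow> real^'p \<Rightarrow> real" where
  "P2val f S dh v = Inf (P2obj f dh v ` S)"

definition new_vertices :: "real^'p \<Rightarrow> real^'p \<Rightarrow> (real^'p) set" where
  "new_vertices v w = {v + (w $ i - v $ i) *\<^sub>R axis i 1 | i. True}"

definition proper_vertices :: "(real^'p) set \<Rightarrow> (real^'p) set" where
  "proper_vertices V = {v \<in> V. \<not> (\<exists>v'\<in>V. v' \<noteq> v \<and> v' \<le> v)}"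

definition copolyblock :: "(real^'p) set \<Rightarrow> real^'p \<Rightarrow> (real^'p) set" where
  "copolyblock V M = (\<Union>v\<in>V. {v..M})"

definition Y_diamond :: "(real^'n \<Rightarrow> real^'p) \<Rightarrow> (real^'n) set \<Rightarrow> real^'p \<Rightarrow> (real^'p) set" where
  "Y_diamond f S M = {y. \<exists>x\<in>S. f x \<le> y} \<inter> {y. y \<le> M}"

definition hausdorff_dist :: "'a::metric_space set \<Rightarrow> 'a set \<Rightarrow> real" where
  "hausdorff_dist Q1 Q2 = max (SUP a\<in>Q1. infdist a Q2) (SUP b\<in>Q2. infdist b Q1)"

(* Reachable states of Algorithm Solve(QVP):
   solve_state f S dh eps k V Veps YWN  means that, in some run of the algorithm,
   the iteration counter is k, the current vertex set is V^k = V, and the sets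
   V_eps and Y_WN are Veps and YWN. *)
inductive solve_state ::
  "(real^'n \<Rightarrow> real^'p) \<Rightarrow> (real^'n) set \<Rightarrow> real^'p \<Rightarrow> real \<Rightarrow>
   nat \<Rightarrow> (real^'p) set \<Rightarrow> (real^'p) set \<Rightarrow> (real^'p) set \<Rightarrow> bool"
  for f S dh eps where
  init: "solve_state f S dh eps 0 {ideal_point f S} {} {}"
| eps_step: "\<lbrakk> solve_state f S dh eps k V Veps YWN; v \<in> V - Veps;
      x \<in> S; P2obj f dh v x = P2val f S dh v;
      norm ((v + P2val f S dh v *\<^sub>R dh) - v) \<le> eps \<rbrakk>
    \<Longrightarrow> solve_state f S dh eps k V (insert v Veps) (insert (f x) YWN)"
| main_step: "\<lbrakk> solve_state f S dh eps k V Veps YWN; v \<in> V - Veps;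
      x \<in> S; P2obj f dh v x = P2val f S dh v;
      \<not> norm ((v + P2val f S dh v *\<^sub>R dh) - v) \<le> eps \<rbrakk>
    \<Longrightarrow> solve_state f S dh eps (Suc k)
          (proper_vertices ((V - {v}) \<union> new_vertices v (v + P2val f S dh v *\<^sub>R dh)))
          Veps (insert (f x) YWN)"

end

theory Submission
  imports Defs
begin

lemma cont_Max_fam:
  fixes g :: "'i \<Rightarrow> 'a::topological_space \<Rightarrow> real"
  assumes "finite I" "I \<noteq> {}" "\<And>j. j \<in> I \<Longrightarrow> continuous_on S (g j)"
  shows "continuous_on S (\<lambda>x. Max ((\<lambda>j. g j x) ` I))"
  using assms
proof (induction I rule: finite_ne_induct)
  case (singleton j)
  then show ?case by simp
next
  case (insert j I)
  have "(\<lambda>x. Max ((\<lambda>j. g j x) ` insert j I)) = (\<lambda>x. max (g j x) (Max ((\<lambda>j. g j x) ` I)))"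
    using insert.hyps by (auto simp: Max_insert)
  then show ?case using insert by (auto intro!: continuous_on_max)
qed

lemma obj_min:
  fixes f :: "real^'n \<Rightarrow> real^'p"
  assumes "S \<noteq> {}" "compact S" "\<forall>i. continuous_on S (\<lambda>x. f x $ i)"
  shows "\<exists>x\<in>S. P2obj f dh v x = P2val f S dh v \<and> (\<forall>y\<in>S. P2val f S dh v \<le> P2obj f dh v y)"
proof -
  have c: "continuous_on S (P2obj f dh v)"
    unfolding P2obj_def divide_inverse
    by (rule cont_Max_fam) (auto intro!: continuous_intros assms(3)[rule_format])
  obtain x where x: "x \<in> S" "\<forall>y\<in>S. P2obj f dh v x \<le> P2obj f dh v y"
    using continuous_attains_inf[OF assms(2,1) c] by blast
  have "P2val f S dh v = P2obj f dh v x"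
    unfolding P2val_def
    by (rule cInf_eq_minimum) (use x in auto)
  then show ?thesis using x by auto
qed

lemma proper_exists:
  fixes V :: "(real^'p) set"
  assumes "finite V" "u \<in> V"
  shows "\<exists>v\<in>proper_vertices V. v \<le> u"
proof -
  let ?A = "{v\<in>V. v \<le> u}"
  let ?g = "\<lambda>v::real^'p. sum (\<lambda>i. v $ i) UNIV"
  have fA: "finite ?A" using assms by auto
  have nA: "?A \<noteq> {}" using assms by auto
  have "Min (?g ` ?A) \<in> ?g ` ?A" using fA nA by (intro Min_in) auto
  then obtain v where v: "v \<in> ?A" "?g v = Min (?g ` ?A)" by auto
  have vmin: "?g v \<le> ?g v'" if "v' \<in> ?A" for v'
    using v(2) fA that by (simp add: Min_le)
  have "v \<in> proper_vertices V"
    unfolding proper_vertices_def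
  proof (safe)
    show "v \<in> V" using v by auto
  next
    fix v' assume h: "v' \<in> V" "v' \<noteq> v" "v' \<le> v"
    then have "v' \<in> ?A" using v order_trans by auto
    then have "?g v \<le> ?g v'" by (rule vmin)
    moreover have "?g v' < ?g v"
    proof -
      obtain i where "v' $ i \<noteq> v $ i" using h(2) by (auto simp: vec_eq_iff)
      then have "v' $ i < v $ i" using h(3) by (auto simp: less_eq_vec_def order.order_iff_strict)
      then show ?thesis
        by (intro sum_strict_mono_ex1) (use h(3) in \<open>auto simp: less_eq_vec_def\<close>)
    qed
    ultimately show False by simp
  qed
  then show ?thesis using v by auto
qed

lemma invariant:
  fixes f :: "real^'n \<Rightarrow> real^'p"
  assumes "S \<noteq> {}" "compact S" "\<forall>i. continuous_on S (\<lambda>x. f x $ i)"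
    and dh: "\<forall>i. dh $ i > 0"
    and "solve_state f S dh eps k V Veps YWN"
  shows "finite V \<and> (\<forall>y\<in>Y_diamond f S M. \<exists>v\<in>V. v \<le> y)"
  using assms(5)
proof (induction rule: solve_state.induct)
  case init
  have "ideal_point f S \<le> y" if yY: "y \<in> Y_diamond f S M" for y
  proof -
    obtain x where x: "x \<in> S" "f x \<le> y" using yY unfolding Y_diamond_def by blast
    have "ideal_point f S $ i \<le> y $ i" for i
    proof -
      have "compact ((\<lambda>x. f x $ i) ` S)"
        using assms(2,3) by (intro compact_continuous_image) auto
      then have "bdd_below ((\<lambda>x. f x $ i) ` S)"
        by (intro bounded_imp_bdd_below compact_imp_bounded)
      then have "Inf ((\<lambda>x. f x $ i) ` S) \<le> f x $ i"
        using x by (intro cInf_lower) auto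
      also have "\<dots> \<le> y $ i" using x by (auto simp: less_eq_vec_def)
      finally show ?thesis by (simp add: ideal_point_def)
    qed
    then show ?thesis by (simp add: less_eq_vec_def)
  qed
  then show ?case by auto
next
  case (eps_step k V Veps YWN v x)
  then show ?case by auto
next
  case (main_step k V Veps YWN v x)
  let ?t = "P2val f S dh v"
  let ?w = "v + ?t *\<^sub>R dh"
  let ?U = "(V - {v}) \<union> new_vertices v ?w"
  have "new_vertices v ?w = (\<lambda>i. v + (?w $ i - v $ i) *\<^sub>R axis i 1) ` UNIV"
    unfolding new_vertices_def by auto
  then have "finite (new_vertices v ?w)" by simp
  then have fU: "finite ?U" using main_step by auto
  have fP: "finite (proper_vertices ?U)" using fU by (auto simp: proper_vertices_def)
  obtain xm where xm: "xm \<in> S" "\<forall>y\<in>S. ?t \<le> P2obj f dh v y"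
    using obj_min[OF assms(1-3), of dh v] by blast
  have "\<exists>u\<in>?U. u \<le> y" if y: "y \<in> Y_diamond f S M" for y
  proof -
    obtain u where u: "u \<in> V" "u \<le> y" using main_step y by auto
    show ?thesis
    proof (cases "u = v")
      case False then show ?thesis using u by auto
    next
      case True
      obtain x0 where x0: "x0 \<in> S" "f x0 \<le> y" using y by (auto simp: Y_diamond_def)
      have "\<exists>i. ?w $ i \<le> y $ i"
      proof (rule ccontr)
        assume "\<not> ?thesis"
        then have lt: "y $ i < v $ i + ?t * dh $ i" for i
        proof -
          have "\<not> ?w $ i \<le> y $ i" using \<open>\<not> (\<exists>i. ?w $ i \<le> y $ i)\<close> by blast
          then show ?thesis by simp
        qed
        have "(f x0 $ j - v $ j) / dh $ j < ?t" for j
        proof -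
          have "f x0 $ j \<le> y $ j" using x0 by (auto simp: less_eq_vec_def)
          then have "f x0 $ j - v $ j < ?t * dh $ j" using lt[of j] by linarith
          then show ?thesis using dh by (simp add: pos_divide_less_eq)
        qed
        then have "P2obj f dh v x0 < ?t" unfolding P2obj_def by (subst Max_less_iff) auto
        then show False using xm x0 by force
      qed
      then obtain i where i: "?w $ i \<le> y $ i" by blast
      let ?u = "v + (?w $ i - v $ i) *\<^sub>R axis i 1"
      have "?u \<in> new_vertices v ?w" unfolding new_vertices_def by blast
      moreover have "?u \<le> y"
        unfolding less_eq_vec_def
      proof
        fix j
        show "?u $ j \<le> y $ j"
          using i u True by (cases "j = i") (auto simp: axis_def less_eq_vec_def)
      qed
      ultimately show ?thesis by blast
    qed
  qed
  then have "\<exists>u\<in>proper_vertices ?U. u \<le> y" if "y \<in> Y_diamond f S M" for y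
    using that proper_exists[OF fU] order_trans by meson
  then show ?case using fP by blast
qed

theorem mainTheorem5:
  fixes f :: "real^'n \<Rightarrow> real^'p" and S :: "(real^'n) set"
    and M dh :: "real^'p" and eps :: real
    and k :: nat and V Veps YWN :: "(real^'p) set"
  assumes "CARD('p) \<ge> 2"
    and "S \<noteq> {}" and "convex S" and "compact S"
    and "\<forall>i. strictly_quasiconvex_on S (\<lambda>x. f x $ i)"
    and "ideal_point f S \<notin> f ` S"
    and "\<forall>i. \<forall>x\<in>S. f x $ i \<le> M $ i"
    and "\<forall>i. dh $ i > 0"
    and "eps \<ge> 0"
    and "solve_state f S dh eps k V Veps YWN"
  shows "hausdorff_dist (copolyblock V M) (Y_diamond f S M)
           \<le> Max ((\<lambda>v. norm ((v + P2val f S dh v *\<^sub>R dh) - v)) ` V)"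
proof -
  have cont: "\<forall>i. continuous_on S (\<lambda>x. f x $ i)"
    using assms(5) by (auto simp: strictly_quasiconvex_on_def)
  have inv: "finite V" "\<forall>y\<in>Y_diamond f S M. \<exists>v\<in>V. v \<le> y"
    using invariant[OF assms(2,4) cont assms(8,10), of M] by auto
  let ?D = "Max ((\<lambda>v. norm ((v + P2val f S dh v *\<^sub>R dh) - v)) ` V)"
  let ?P = "copolyblock V M"
  let ?Y = "Y_diamond f S M"
  obtain x1 where x1: "x1 \<in> S" using assms(2) by auto
  have fx1: "f x1 \<in> ?Y" using x1 assms(7) by (auto simp: Y_diamond_def less_eq_vec_def)
  then have Yne: "?Y \<noteq> {}" by auto
  have YP: "?Y \<subseteq> ?P"
  proof
    fix y assume y: "y \<in> ?Y"
    then obtain v where "v \<in> V" "v \<le> y" using inv by auto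
    moreover have "y \<le> M" using y by (auto simp: Y_diamond_def)
    ultimately show "y \<in> ?P" by (auto simp: copolyblock_def)
  qed
  have Pne: "?P \<noteq> {}" using YP Yne by auto
  then have Vne: "V \<noteq> {}" by (auto simp: copolyblock_def)
  have Dge: "norm ((v + P2val f S dh v *\<^sub>R dh) - v) \<le> ?D" if "v \<in> V" for v
    using inv(1) that by (intro Max_ge) auto
  have D0: "0 \<le> ?D" using Dge Vne norm_ge_zero order_trans by blast
  have A: "infdist a ?Y \<le> ?D" if a: "a \<in> ?P" for a
  proof -
    obtain v where v: "v \<in> V" "v \<le> a" "a \<le> M" using a by (auto simp: copolyblock_def)
    let ?w = "v + P2val f S dh v *\<^sub>R dh"
    obtain xm where xm: "xm \<in> S" "P2obj f dh v xm = P2val f S dh v"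
      using obj_min[OF assms(2,4) cont, of dh v] by blast
    have fw: "f xm $ j \<le> ?w $ j" for j
    proof -
      have "(f xm $ j - v $ j) / dh $ j \<le> P2obj f dh v xm"
        unfolding P2obj_def by (rule Max_ge) auto
      then have "(f xm $ j - v $ j) / dh $ j \<le> P2val f S dh v" using xm by simp
      then have "f xm $ j - v $ j \<le> P2val f S dh v * dh $ j"
        using assms(8) by (simp add: pos_divide_le_eq)
      then show ?thesis by simp
    qed
    define b where "b = (\<chi> i. max (a $ i) (f xm $ i))"
    have bY: "b \<in> ?Y"
      unfolding Y_diamond_def b_def using xm v assms(7)
      by (auto simp: less_eq_vec_def intro!: bexI[of _ xm])
    have "infdist a ?Y \<le> dist a b" using bY by (rule infdist_le)
    also have "\<dots> = norm (a - b)" by (simp add: dist_norm)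
    also have "\<dots> \<le> norm (?w - v)"
    proof (rule norm_le_componentwise_cart)
      fix i
      have "v $ i \<le> a $ i" using v by (auto simp: less_eq_vec_def)
      then show "norm ((a - b) $ i) \<le> norm ((?w - v) $ i)"
        using fw[of i] by (auto simp: b_def)
    qed
    also have "\<dots> \<le> ?D" using Dge v by blast
    finally show ?thesis .
  qed
  have s1: "(SUP a\<in>?P. infdist a ?Y) \<le> ?D"
    using Pne A by (intro cSUP_least) auto
  have s2: "(SUP b\<in>?Y. infdist b ?P) \<le> ?D"
    using Yne YP D0 by (intro cSUP_least) (auto simp: infdist_zero subsetD)
  show ?thesis unfolding hausdorff_dist_def using s1 s2 by simp
qed

end
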